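(* Let $A$ and $B$ be nontrivial commutative groups. (a) The $\mathbb{Z}[A]$-submodule of $B^A$ generated by $\{\delta_{0,b}: b\in B\}$ is the set of all $f\in B^A$ with $f(a)=0$ for all but finitely many $a\in A$. Hence this set generates $B^A$ as a $\mathbb{Z}[A]$-module if and only if $A$ is finite. (b) If $A$ is finite and $B=\mathbb{Z}/n\mathbb{Z}$ for some $n\ge2$, then the $(\mathbb{Z}/n\mathbb{Z})[A]$-module $B^A$ is free of rank $1$, generated by $\delta_{a,u}$ for any $a\in A$ and any unit $u\in(\mathbb{Z}/n\mathbb{Z})^\times$. (c) If $A$ is finite and $B$ has finite exponent, then for every $a\in A$ and every $b\in B$ of order $\exp(B)$ we have $\delta(A,B)=\operatorname{fdeg}(\delta_{a,b})$.
   Context: For commutative groups $A,B$, $B^A$ denotes the commutative group (under pointwise addition) of all maps $A\to B$. It is a $\mathbb{Z}[A]$-module via $(\sum_a n_a[a])f=\sum_a n_a\tau_a f$, where $(\tau_a f)(x)=f(x+a)$; when $B$ has finite exponent $n$ this is a $(\mathbb{Z}/n\mathbb{Z})[A]$-module. For $a\in A$, $\Delta_a f=\tau_af-f$. Let $\widetilde{\mathbb N}=\mathbb N\cup\{-\infty,\infty\}$, totally ordered with $-\infty$ least and $\infty$ greatest. The functional degree $\operatorname{fdeg}(f)$ of $f\in B^A$ is: $-\infty$ if $f=0$; otherwise the least $n\in\mathbb N$ such that $\Delta_{a_1}\cdots\Delta_{a_{n+1}}f=0$ for all $a_1,\dots,a_{n+1}\in A$; and $\infty$ if no such $n$ exists.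 $\delta(A,B)=\sup\{\operatorname{fdeg}(f): f\in B^A\}$. For $a\in A$, $b\in B$, $\delta_{a,b}\in B^A$ is given by $\delta_{a,b}(a)=b$ and $\delta_{a,b}(x)=0$ for $x\neq a$. *)

theory Defs
  imports "HOL-Library.Extended_Real" "Berlekamp_Zassenhaus.Finite_Field"
begin

definition natmul :: "nat \<Rightarrow> 'b::ab_group_add \<Rightarrow> 'b" where
  "natmul n b = (((+) b) ^^ n) 0"

definition zmul :: "int \<Rightarrow> 'b::ab_group_add \<Rightarrow> 'b" where
  "zmul k b = (if k \<ge> 0 then natmul (nat k) b else - natmul (nat (- k)) b)"

definition tau :: "'a::ab_group_add \<Rightarrow> ('a \<Rightarrow> 'b) \<Rightarrow> 'a \<Rightarrow> 'b" where
  "tau a f = (\<lambda>x. f (x + a))"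

definition Dlt :: "'a::ab_group_add \<Rightarrow> ('a \<Rightarrow> 'b::ab_group_add) \<Rightarrow> 'a \<Rightarrow> 'b" where
  "Dlt a f = (\<lambda>x. tau a f x - f x)"

fun Dlts :: "'a::ab_group_add list \<Rightarrow> ('a \<Rightarrow> 'b::ab_group_add) \<Rightarrow> 'a \<Rightarrow> 'b" where
  "Dlts [] f = f"
| "Dlts (a # as) f = Dlt a (Dlts as f)"

(* functional degree, with \<nat> \<union> {-\<infinity>,\<infinity>} embedded order-preservingly in ereal *)
definition fdeg :: "('a::ab_group_add \<Rightarrow> 'b::ab_group_add) \<Rightarrow> ereal" where
  "fdeg f = (if f = (\<lambda>_. 0) then - \<infinity>
     else if (\<exists>n. \<forall>as. length as = Suc n \<longrightarrow> Dlts as f = (\<lambda>_. 0))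
       then ereal (real (LEAST n. \<forall>as. length as = Suc n \<longrightarrow> Dlts as f = (\<lambda>_. 0)))
     else \<infinity>)"

definition fdelta :: "'a::ab_group_add itself \<Rightarrow> 'b::ab_group_add itself \<Rightarrow> ereal" where
  "fdelta _ _ = (SUP f \<in> (UNIV :: ('a \<Rightarrow> 'b) set). fdeg f)"

definition dfun :: "'a \<Rightarrow> 'b::zero \<Rightarrow> 'a \<Rightarrow> 'b" where
  "dfun a b = (\<lambda>x. if x = a then b else 0)"

definition groupring :: "('a \<Rightarrow> 'r::zero) set" where
  "groupring = {r. finite {a. r a \<noteq> 0}}"

definition zact :: "('a::ab_group_add \<Rightarrow> int) \<Rightarrow> ('a \<Rightarrow> 'b::ab_group_add) \<Rightarrow> 'a \<Rightarrow> 'b" where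
  "zact r f = (\<lambda>x. \<Sum>a\<in>{a. r a \<noteq> 0}. zmul (r a) (tau a f x))"

definition ract :: "('a::ab_group_add \<Rightarrow> 'r::comm_ring_1) \<Rightarrow> ('a \<Rightarrow> 'r) \<Rightarrow> 'a \<Rightarrow> 'r" where
  "ract r f = (\<lambda>x. \<Sum>a\<in>{a. r a \<noteq> 0}. r a * tau a f x)"

inductive_set zspan :: "('a::ab_group_add \<Rightarrow> 'b::ab_group_add) set \<Rightarrow> ('a \<Rightarrow> 'b) set"
  for S where
  zero: "(\<lambda>_. 0) \<in> zspan S"
| gen: "s \<in> S \<Longrightarrow> s \<in> zspan S"
| add: "f \<in> zspan S \<Longrightarrow> g \<in> zspan S \<Longrightarrow> (\<lambda>x. f x + g x) \<in> zspan S"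
| smult: "r \<in> groupring \<Longrightarrow> f \<in> zspan S \<Longrightarrow> zact r f \<in> zspan S"

definition addord :: "'b::ab_group_add \<Rightarrow> nat" where
  "addord b = (LEAST k. k > 0 \<and> natmul k b = 0)"

definition expo :: "'b::ab_group_add itself \<Rightarrow> nat" where
  "expo _ = (LEAST n. n > 0 \<and> (\<forall>b::'b. natmul n b = 0))"

end

theory Submission
  imports Defs
begin

lemma natmul_0[simp]: "natmul 0 b = 0" by (simp add: natmul_def)
lemma natmul_Suc[simp]: "natmul (Suc n) b = b + natmul n b" by (simp add: natmul_def)
lemma natmul_add: "natmul (m + n) b = natmul m b + natmul n b"
  by (induction m) (simp_all add: add.assoc)
lemma natmul_zero_right[simp]: "natmul n (0::'b::ab_group_add) = 0"
  by (induction n) simp_all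
lemma natmul_mult_zero: "natmul d b = 0 \<Longrightarrow> natmul (q * d) b = 0"
  by (induction q) (simp_all add: natmul_add)

lemma zmul_diff_nat: "zmul (int m - int n) b = natmul m b - natmul n b"
proof (cases "int m - int n \<ge> 0")
  case True
  then have "m = nat (int m - int n) + n" by simp
  then have "natmul m b = natmul (nat (int m - int n)) b + natmul n b"
    by (metis natmul_add)
  then show ?thesis using True by (simp add: zmul_def algebra_simps)
next
  case False
  then have "n = nat (- (int m - int n)) + m" by simp
  then have "natmul n b = natmul (nat (- (int m - int n))) b + natmul m b"
    by (metis natmul_add)
  then show ?thesis using False by (simp add: zmul_def algebra_simps)
qed

lemma zmul_repr: "zmul k b = natmul (nat k) b - natmul (nat (-k)) b"
  by (simp add: zmul_def)

lemma zmul_add: "zmul (k + l) b = zmul k b + zmul l b"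
proof -
  have "k + l = int (nat k + nat l) - int (nat (-k) + nat (-l))" by simp
  then have "zmul (k + l) b = natmul (nat k + nat l) b - natmul (nat (-k) + nat (-l)) b"
    by (metis zmul_diff_nat)
  then show ?thesis by (simp add: zmul_repr natmul_add algebra_simps)
qed

lemma zmul_diff: "zmul (k - l) b = zmul k b - zmul l b"
  using zmul_add[of "k - l" l b] by (simp add: algebra_simps)

lemma zmul_0[simp]: "zmul 0 b = 0" by (simp add: zmul_def)
lemma zmul_1[simp]: "zmul 1 b = b" by (simp add: zmul_def)
lemma zmul_zero_right[simp]: "zmul k (0::'b::ab_group_add) = 0" by (simp add: zmul_def)

lemma Dlts_zmul: "Dlts as (\<lambda>x. zmul (h x) v) = (\<lambda>x. zmul (Dlts as h x) v)"
  by (induction as) (simp_all add: Dlt_def tau_def zmul_diff)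

lemma Dlts_tau: "Dlts as (tau d f) = tau d (Dlts as f)"
  by (induction as) (simp_all add: Dlt_def tau_def add.commute add.left_commute)

lemma Dlts_sum: "Dlts as (\<lambda>x. \<Sum>c\<in>I. F c x) = (\<lambda>x. \<Sum>c\<in>I. Dlts as (F c) x)"
  by (induction as) (simp_all add: Dlt_def tau_def sum_subtractf)

lemma dfun_zmul: "dfun c v = (\<lambda>x. zmul (dfun c (1::int) x) v)"
  by (auto simp: dfun_def)

lemma dfun_tau: "dfun (c::'a::ab_group_add) v = tau (a - c) (dfun a v)"
  by (auto simp: dfun_def tau_def algebra_simps)

lemma fdeg_le:
  fixes f g :: "'a::ab_group_add \<Rightarrow> 'b::ab_group_add"
  assumes g0: "g \<noteq> (\<lambda>_. 0)" and K: "\<And>as. Dlts as g = (\<lambda>_. 0) \<Longrightarrow> Dlts as f = (\<lambda>_. 0)"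
  shows "fdeg f \<le> fdeg g"
proof -
  define P where "P = (\<lambda>(h::'a\<Rightarrow>'b) n. \<forall>as. length as = Suc n \<longrightarrow> Dlts as h = (\<lambda>_. 0 :: 'b))"
  have fd: "fdeg h = (if h = (\<lambda>_. 0) then - \<infinity> else if (\<exists>n. P h n) then ereal (real (Least (P h))) else \<infinity>)" for h
    unfolding fdeg_def P_def by (rule refl)
  show ?thesis
  proof (cases "f = (\<lambda>_. 0)")
    case True then have "fdeg f = - \<infinity>" unfolding fd[of f] by simp
    then show ?thesis by simp
  next
    case fnz: False
    show ?thesis
    proof (cases "\<exists>n. P g n")
      case False
      then have "fdeg g = \<infinity>" using g0 fd[of g] by (simp only: if_False)
      then show ?thesis by simp
    next
      case True
      have Pg: "P g (Least (P g))" using True by (rule LeastI_ex)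
      have Pf: "P f (Least (P g))" using Pg K unfolding P_def by blast
      then have le: "Least (P f) \<le> Least (P g)" by (rule Least_le)
      have eg: "fdeg g = ereal (real (Least (P g)))" using g0 True fd[of g] by (simp only: if_False if_True)
      have "\<exists>n. P f n" using Pf by blast
      then have ef: "fdeg f = ereal (real (Least (P f)))" using fnz fd[of f] by (simp only: if_False if_True)
      show ?thesis unfolding ef eg using le by simp
    qed
  qed
qed

theorem mainTheorem7:
  fixes A_nontriv :: "'a::ab_group_add" and B_nontriv :: "'b::ab_group_add"
  assumes "A_nontriv \<noteq> 0" and "B_nontriv \<noteq> 0"
  shows
    "zspan {dfun (0::'a) b | b::'b. True} = {f. finite {a. f a \<noteq> 0}}
     \<and> (zspan {dfun (0::'a) b | b::'b. True} = UNIV \<longleftrightarrow> finite (UNIV :: 'a set))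
     \<and> (finite (UNIV :: 'a set) \<longrightarrow>
          (\<forall>(a::'a) (u::'n::nontriv mod_ring). u dvd 1 \<longrightarrow>
             bij_betw (\<lambda>r. ract r (dfun a u)) groupring UNIV))
     \<and> (finite (UNIV :: 'a set) \<longrightarrow> (\<exists>n>0. \<forall>b::'b. natmul n b = 0) \<longrightarrow>
          (\<forall>(a::'a) (b::'b). addord b = expo TYPE('b) \<longrightarrow>
             fdelta TYPE('a) TYPE('b) = fdeg (dfun a b)))"
proof -
  let ?S = "{dfun (0::'a) b | b::'b. True}"
  let ?FS = "{f::'a\<Rightarrow>'b. finite {a. f a \<noteq> 0}}"
  have sub1: "zspan ?S \<subseteq> ?FS"
  proof
    fix f assume "f \<in> zspan ?S"
    then show "f \<in> ?FS"
    proof (induction rule: zspan.induct)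
      case zero then show ?case by simp
    next
      case (gen s)
      then obtain b where "s = dfun 0 b" by blast
      then have "{a. s a \<noteq> 0} \<subseteq> {0}" by (auto simp: dfun_def)
      then show ?case by (auto intro: finite_subset)
    next
      case (add f g)
      have "{x. f x + g x \<noteq> 0} \<subseteq> {x. f x \<noteq> 0} \<union> {x. g x \<noteq> 0}" by auto
      then show ?case using add by (auto intro: finite_subset)
    next
      case (smult r f)
      have "{x. zact r f x \<noteq> 0} \<subseteq> (\<Union>a\<in>{a. r a \<noteq> 0}. (\<lambda>y. y - a) ` {y. f y \<noteq> 0})"
      proof
        fix x assume "x \<in> {x. zact r f x \<noteq> 0}"
        then obtain a where "r a \<noteq> 0" "zmul (r a) (tau a f x) \<noteq> 0"
          unfolding zact_def by (auto dest: sum.not_neutral_contains_not_neutral)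
        then have "f (x + a) \<noteq> 0" by (auto simp: tau_def)
        then show "x \<in> (\<Union>a\<in>{a. r a \<noteq> 0}. (\<lambda>y. y - a) ` {y. f y \<noteq> 0})"
          using \<open>r a \<noteq> 0\<close> by (auto intro!: bexI[of _ a] image_eqI[of _ _ "x + a"])
      qed
      moreover have "finite (\<Union>a\<in>{a. r a \<noteq> 0}. (\<lambda>y. y - a) ` {y. f y \<noteq> 0})"
        using smult by (auto simp: groupring_def)
      ultimately show ?case by (auto intro: finite_subset)
    qed
  qed
  have dfun_in: "dfun c v \<in> zspan ?S" for c v
  proof -
    have r: "dfun (-c) (1::int) \<in> groupring" by (simp add: groupring_def dfun_def)
    have "dfun 0 v \<in> zspan ?S" by (rule zspan.gen) blast
    then have "zact (dfun (-c) (1::int)) (dfun 0 v) \<in> zspan ?S" using r by (rule zspan.smult[rotated])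
    moreover have "zact (dfun (-c) (1::int)) (dfun 0 v) = dfun c v"
    proof -
      have "{a. dfun (-c) (1::int) a \<noteq> 0} = {-c}" by (auto simp: dfun_def)
      then show ?thesis by (auto simp: zact_def dfun_def tau_def algebra_simps)
    qed
    ultimately show ?thesis by simp
  qed
  have sums_in: "finite F \<Longrightarrow> (\<lambda>x. \<Sum>c\<in>F. dfun c (g c) x) \<in> zspan ?S" for F g
  proof (induction F rule: finite_induct)
    case empty then show ?case by (simp add: zspan.zero)
  next
    case (insert c F)
    have "(\<lambda>x. dfun c (g c) x + (\<Sum>c\<in>F. dfun c (g c) x)) \<in> zspan ?S"
      by (rule zspan.add[OF dfun_in insert.IH])
    then show ?case using insert by simp
  qed
  have sub2: "?FS \<subseteq> zspan ?S"
  proof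
    fix f assume f: "f \<in> ?FS"
    have "f = (\<lambda>x. \<Sum>c\<in>{a. f a \<noteq> 0}. dfun c (f c) x)"
    proof
      fix x
      show "f x = (\<Sum>c\<in>{a. f a \<noteq> 0}. dfun c (f c) x)"
      proof (cases "f x = 0")
        case True
        have "(\<Sum>c\<in>{a. f a \<noteq> 0}. dfun c (f c) x) = 0"
          by (rule sum.neutral) (use True in \<open>auto simp: dfun_def\<close>)
        then show ?thesis using True by simp
      next
        case False
        have "(\<Sum>c\<in>{a. f a \<noteq> 0}. dfun c (f c) x) = dfun x (f x) x"
          unfolding dfun_def using False f by (subst sum.delta') auto
        then show ?thesis by (simp add: dfun_def)
      qed
    qed
    moreover have "(\<lambda>x. \<Sum>c\<in>{a. f a \<noteq> 0}. dfun c (f c) x) \<in> zspan ?S"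
      using f by (intro sums_in) simp
    ultimately show "f \<in> zspan ?S" by simp
  qed
  have A: "zspan ?S = ?FS" using sub1 sub2 by blast
  have B: "zspan ?S = UNIV \<longleftrightarrow> finite (UNIV :: 'a set)"
  proof
    assume "zspan ?S = UNIV"
    then have "?FS = UNIV" using A by simp
    then have "(\<lambda>_::'a. B_nontriv) \<in> ?FS" by (simp only: UNIV_I)
    then show "finite (UNIV :: 'a set)" using assms(2) by simp
  next
    assume "finite (UNIV :: 'a set)"
    then show "zspan ?S = UNIV" using A by (auto intro: finite_subset)
  qed
  have C: "finite (UNIV :: 'a set) \<longrightarrow>
          (\<forall>(a::'a) (u::'n::nontriv mod_ring). u dvd 1 \<longrightarrow>
             bij_betw (\<lambda>r. ract r (dfun a u)) groupring UNIV)"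
  proof (intro impI allI)
    fix a :: 'a and u :: "'n mod_ring"
    assume fin: "finite (UNIV :: 'a set)" and u: "u dvd 1"
    then obtain v where v: "1 = u * v" by (auto elim: dvdE)
    have GR: "groupring = (UNIV :: ('a \<Rightarrow> 'n mod_ring) set)"
      using fin by (auto simp: groupring_def intro: finite_subset)
    have ev: "ract r (dfun a u) = (\<lambda>x. r (a - x) * u)" for r :: "'a \<Rightarrow> 'n mod_ring"
    proof
      fix x
      have "ract r (dfun a u) x = (\<Sum>c\<in>{c. r c \<noteq> 0}. if c = a - x then r c * u else 0)"
        unfolding ract_def dfun_def tau_def
        by (rule sum.cong) (auto simp: algebra_simps)
      also have "\<dots> = r (a - x) * u"
        by (subst sum.delta) (auto intro: finite_subset[OF _ fin])
      finally show "ract r (dfun a u) x = r (a - x) * u" .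
    qed
    show "bij_betw (\<lambda>r. ract r (dfun a u)) groupring UNIV"
      unfolding GR bij_betw_def
    proof
      show "inj_on (\<lambda>r. ract r (dfun a u)) UNIV"
      proof (rule inj_onI)
        fix r s :: "'a \<Rightarrow> 'n mod_ring"
        assume "ract r (dfun a u) = ract s (dfun a u)"
        then have h: "\<And>x. r (a - x) * u = s (a - x) * u" by (metis ev)
        show "r = s"
        proof
          fix y
          have "r y * u * v = s y * u * v" using h[of "a - y"] by simp
          then show "r y = s y" using v by (simp add: mult.assoc)
        qed
      qed
      show "range (\<lambda>r. ract r (dfun a u)) = UNIV"
      proof (rule surjI)
        fix g :: "'a \<Rightarrow> 'n mod_ring"
        have "ract (\<lambda>y. g (a - y) * v) (dfun a u) = g"
          by (rule ext) (simp add: ev mult.assoc v[symmetric] mult.commute[of v u])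
        then show "ract (\<lambda>y. g (a - y) * v) (dfun a u) = g" .
      qed
    qed
  qed
  have D: "finite (UNIV :: 'a set) \<longrightarrow> (\<exists>n>0. \<forall>b::'b. natmul n b = 0) \<longrightarrow>
          (\<forall>(a::'a) (b::'b). addord b = expo TYPE('b) \<longrightarrow>
             fdelta TYPE('a) TYPE('b) = fdeg (dfun a b))"
  proof (intro impI allI)
    fix a :: 'a and b :: 'b
    assume fin: "finite (UNIV :: 'a set)" and ex: "\<exists>n>0. \<forall>b::'b. natmul n b = 0"
      and ob: "addord b = expo TYPE('b)"
    let ?d = "expo TYPE('b)"
    have ed: "?d > 0 \<and> (\<forall>b'::'b. natmul ?d b' = 0)"
      unfolding expo_def by (rule LeastI_ex) (use ex in blast)
    have bd: "?d > 0 \<and> natmul ?d b = 0" using ed by blast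
    have ab: "addord b > 0 \<and> natmul (addord b) b = 0"
      unfolding addord_def by (rule LeastI_ex) (use bd in blast)
    have b0: "b \<noteq> 0"
    proof
      assume "b = 0"
      then have "addord b = 1" unfolding addord_def
        by (intro Least_equality) auto
      then have "natmul 1 B_nontriv = 0" using ed ob by metis
      then show False using assms(2) by simp
    qed
    have kern: "zmul k b' = 0" if zk: "zmul k b = 0" for k and b' :: 'b
    proof -
      let ?m = "nat \<bar>k\<bar>"
      have m0: "natmul ?m b = 0" using zk by (auto simp: zmul_def split: if_splits)
      have "?m = (?m div ?d) * ?d + ?m mod ?d" by simp
      then have "natmul ?m b = natmul ((?m div ?d) * ?d) b + natmul (?m mod ?d) b"
        by (metis natmul_add)
      then have r0: "natmul (?m mod ?d) b = 0"
        using natmul_mult_zero[of ?d b "?m div ?d"] bd m0 by simp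
      have "?m mod ?d = 0"
      proof (rule ccontr)
        assume "?m mod ?d \<noteq> 0"
        then have "addord b \<le> ?m mod ?d" unfolding addord_def
          using r0 by (intro Least_le) simp
        moreover have "?m mod ?d < ?d" using bd by simp
        ultimately show False using ob by simp
      qed
      then have "?m = (?m div ?d) * ?d" by (metis add_0_right div_mult_mod_eq)
      then have "natmul ?m b' = 0" using natmul_mult_zero[of ?d b' "?m div ?d"] ed by metis
      then show ?thesis by (auto simp: zmul_def)
    qed
    have dnz: "dfun a b \<noteq> (\<lambda>_. 0)"
    proof
      assume "dfun a b = (\<lambda>_. 0)"
      then have "dfun a b a = 0" by simp
      then show False using b0 by (simp add: dfun_def)
    qed
    have le: "fdeg f \<le> fdeg (dfun a b)" for f :: "'a \<Rightarrow> 'b"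
    proof (rule fdeg_le[OF dnz])
      fix as assume z: "Dlts as (dfun a b) = (\<lambda>_. 0)"
      have zz: "zmul (Dlts as (dfun a (1::int)) x) b = 0" for x
        using fun_cong[OF z, of x] Dlts_zmul[of as "dfun a (1::int)" b] dfun_zmul[of a b]
        by metis
      have each: "Dlts as (dfun c v) = (\<lambda>_. 0)" for c and v :: 'b
      proof
        fix x
        have "Dlts as (dfun c v) x = Dlts as (tau (a - c) (dfun a v)) x"
          by (metis dfun_tau)
        also have "\<dots> = Dlts as (dfun a v) (x + (a - c))" by (simp only: Dlts_tau) (simp add: tau_def)
        also have "\<dots> = zmul (Dlts as (dfun a (1::int)) (x + (a - c))) v"
          using Dlts_zmul[of as "dfun a (1::int)" v] by (simp add: dfun_zmul[of a v, symmetric])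
        also have "\<dots> = 0" using zz[of "x + (a - c)"] by (rule kern)
        finally show "Dlts as (dfun c v) x = 0" .
      qed
      have "f = (\<lambda>x. \<Sum>c\<in>UNIV. dfun c (f c) x)"
        by (rule ext) (simp add: dfun_def sum.delta fin)
      then have "Dlts as f = Dlts as (\<lambda>x. \<Sum>c\<in>UNIV. dfun c (f c) x)" by simp
      then have "Dlts as f = (\<lambda>x. \<Sum>c\<in>UNIV. Dlts as (dfun c (f c)) x)"
        by (simp only: Dlts_sum)
      then show "Dlts as f = (\<lambda>_. 0)" by (simp add: each)
    qed
    show "fdelta TYPE('a) TYPE('b) = fdeg (dfun a b)"
      unfolding fdelta_def
    proof (rule antisym)
      show "(SUP f\<in>(UNIV :: ('a \<Rightarrow> 'b) set). fdeg f) \<le> fdeg (dfun a b)"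
        by (rule SUP_least) (rule le)
      show "fdeg (dfun a b) \<le> (SUP f\<in>(UNIV :: ('a \<Rightarrow> 'b) set). fdeg f)"
        by (rule SUP_upper) simp
    qed
  qed
  show ?thesis by (intro conjI A B C D)
qed

end
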